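(* Let $(V,\eta)$ be as in the context. For any three states $s,s_1,s_2\in\mathcal S$ there exists a unique $\vec\beta\in T_s\mathcal S$ with $\eta(\vec\beta,\vec\beta)<1$ such that $B(s,\vec\beta)s_1=s_2$. It is the following rational function of $(s,s_1,s_2)$: $$\vec\beta(s,s_1,s_2)=\frac{\gamma_1+\gamma_2}{\gamma_1^2+\gamma_2^2+\gamma_{12}-1}\bigl(s_2-s_1-(\gamma_2-\gamma_1)s\bigr),$$ where $\gamma_1=-\eta(s,s_1)$, $\gamma_2=-\eta(s,s_2)$, $\gamma_{12}=-\eta(s_1,s_2)$. The corresponding boost $B(s,s_1,s_2):=B(s,\vec\beta(s,s_1,s_2))$ is likewise rational in $(s,s_1,s_2)$, namely, with $s_{21}:=s_2-s_1$, $$B(s,s_1,s_2)=\mathrm{id}_V+\frac{2(1-\gamma_{12})\,s\otimes s+s_{21}\otimes s_{21}+2\gamma_1\,s\otimes s_{21}-2\gamma_2\,s_{21}\otimes s}{1+2\gamma_1\gamma_2-\gamma_{12}}.$$ Moreover $\vec\beta$ is Lorentz equivariant: for every linear map $L:V\to V$ preserving $\eta$ and mapping $\mathcal S$ onto itself, $\vec\beta(Ls,Ls_1,Ls_2)=L\,\vec\beta(s,s_1,s_2)$.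
   Context: $V$ is a 4-dimensional real vector space with a symmetric non-degenerate bilinear form $\eta$ of signature $(-,+,+,+)$. The set of states of motion $\mathcal S$ is one fixed connected component of $\{v\in V:\eta(v,v)=-1\}$ (the future unit timelike vectors). For $s\in\mathcal S$, $T_s\mathcal S:=\{u\in V:\eta(u,s)=0\}$, on which $\eta$ is positive definite. Endomorphisms are written via $(u\otimes v)(w):=\eta(v,w)\,u$, and $u\wedge v:=u\otimes v-v\otimes u$. For $s\in\mathcal S$ and $\vec\beta\in T_s\mathcal S$ with $\beta^2:=\eta(\vec\beta,\vec\beta)<1$, $\beta>0$, put $\vec n=\vec\beta/\beta$, $\gamma=(1-\beta^2)^{-1/2}$; the boost relative to $s$ with velocity $\vec\beta$ is $$B(s,\vec\beta)=\mathrm{id}_V+(\gamma-1)(-s\otimes s+\vec n\otimes\vec n)+\beta\gamma(s\otimes\vec n-\vec n\otimes s),$$ and $B(s,0)=\mathrm{id}_V$. *)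

theory Defs
  imports "HOL-Analysis.Analysis"
begin

text \<open>A symmetric bilinear form of signature (-,+,+,+) on a 4-dimensional real vector space:
  symmetric, bilinear, and admitting a basis e0,...,e3 with eta(e_i,e_j) = diag(-1,1,1,1)
  (this encodes non-degeneracy and the signature).\<close>
definition minkowski_form :: "('v::euclidean_space \<Rightarrow> 'v \<Rightarrow> real) \<Rightarrow> bool" where
  "minkowski_form eta \<longleftrightarrow> DIM('v) = 4 \<and> bilinear eta \<and> (\<forall>x y. eta x y = eta y x) \<and>
     (\<exists>e::nat \<Rightarrow> 'v. span (e ` {..<4}) = UNIV \<and>
        eta (e 0) (e 0) = -1 \<and> (\<forall>i\<in>{1..3}. eta (e i) (e i) = 1) \<and>
        (\<forall>i<4. \<forall>j<4. i \<noteq> j \<longrightarrow> eta (e i) (e j) = 0))"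

definition tens :: "('v::real_vector \<Rightarrow> 'v \<Rightarrow> real) \<Rightarrow> 'v \<Rightarrow> 'v \<Rightarrow> 'v \<Rightarrow> 'v" where
  "tens eta u v = (\<lambda>w. eta v w *\<^sub>R u)"

definition boost :: "('v::real_vector \<Rightarrow> 'v \<Rightarrow> real) \<Rightarrow> 'v \<Rightarrow> 'v \<Rightarrow> 'v \<Rightarrow> 'v" where
  "boost eta s \<beta> = (if \<beta> = 0 then id else
     (let b = sqrt (eta \<beta> \<beta>); n = (1 / b) *\<^sub>R \<beta>; g = 1 / sqrt (1 - b\<^sup>2) in
      (\<lambda>w. w + (g - 1) *\<^sub>R (- tens eta s s w + tens eta n n w)
             + (b * g) *\<^sub>R (tens eta s n w - tens eta n s w))))"

definition beta_vel :: "('v::real_vector \<Rightarrow> 'v \<Rightarrow> real) \<Rightarrow> 'v \<Rightarrow> 'v \<Rightarrow> 'v \<Rightarrow> 'v" where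
  "beta_vel eta s s1 s2 =
     (let g1 = - eta s s1; g2 = - eta s s2; g12 = - eta s1 s2 in
      ((g1 + g2) / (g1\<^sup>2 + g2\<^sup>2 + g12 - 1)) *\<^sub>R (s2 - s1 - (g2 - g1) *\<^sub>R s))"

end

theory Submission
  imports Defs
begin


lemma arith4:
  fixes a0 a1 a2 a3 x0 x1 x2 x3 :: real
  assumes "a0^2 = 1 + a1^2 + a2^2 + a3^2" "x0*a0 = x1*a1+x2*a2+x3*a3"
  shows "x0^2 \<le> x1^2+x2^2+x3^2" and "x0^2 = x1^2+x2^2+x3^2 \<Longrightarrow> x0 = 0 \<and> x1 = 0 \<and> x2 = 0 \<and> x3 = 0"
proof -
  define X where "X = x1^2+x2^2+x3^2"
  define A where "A = a1^2+a2^2+a3^2"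
  have lag: "(x1*a1+x2*a2+x3*a3)^2 + ((x1*a2-x2*a1)^2 + (x1*a3-x3*a1)^2 + (x2*a3-x3*a2)^2) = X*A"
    unfolding X_def A_def by (simp add: power2_eq_square algebra_simps)
  have "(x0*a0)^2 \<le> X*A" using lag assms(2) by (smt (verit) zero_le_power2)
  moreover have "a0^2 = 1 + A" using assms(1) unfolding A_def by simp
  ultimately have h: "x0^2 * (1 + A) \<le> X*A" by (metis power_mult_distrib)
  have A0: "A \<ge> 0" unfolding A_def by simp
  have X0: "X \<ge> 0" unfolding X_def by simp
  have x00: "x0^2 \<ge> 0" by simp
  have key: "x0^2 \<le> (X - x0^2) * A" using h by (simp add: algebra_simps)
  show "x0^2 \<le> x1^2+x2^2+x3^2"
  proof (rule ccontr)
    assume "\<not> ?thesis" hence "X < x0^2" unfolding X_def by simp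
    hence "(X - x0^2) * A \<le> 0" using A0 by (simp add: mult_nonpos_nonneg)
    hence "x0^2 = 0" using key x00 by linarith
    thus False using \<open>X < x0^2\<close> X0 by simp
  qed
  assume eqx: "x0^2 = x1^2+x2^2+x3^2"
  hence "x0^2 \<le> 0" using key unfolding X_def by simp
  hence "x0^2 = 0" using x00 by linarith
  moreover hence "x1^2+x2^2+x3^2 = 0" using eqx by simp
  moreover have "x1^2 \<ge> 0" "x2^2 \<ge> 0" "x3^2 \<ge> 0" by simp_all
  ultimately have "x0^2 = 0" "x1^2 = 0" "x2^2 = 0" "x3^2 = 0" by linarith+
  thus "x0 = 0 \<and> x1 = 0 \<and> x2 = 0 \<and> x3 = 0" by simp
qed

lemma coords:
  fixes eta :: "'v::euclidean_space \<Rightarrow> 'v \<Rightarrow> real"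
  assumes "minkowski_form eta"
  obtains e :: "nat \<Rightarrow> 'v" where
    "\<And>v. \<exists>c0 c1 c2 c3. v = c0 *\<^sub>R e 0 + c1 *\<^sub>R e 1 + c2 *\<^sub>R e 2 + c3 *\<^sub>R e 3"
    "eta (e 0) (e 0) = -1" "eta (e 1) (e 1) = 1" "eta (e 2) (e 2) = 1" "eta (e 3) (e 3) = 1"
    "\<And>i j. i < 4 \<Longrightarrow> j < 4 \<Longrightarrow> i \<noteq> j \<Longrightarrow> eta (e i) (e j) = 0"
proof -
  from assms obtain e :: "nat \<Rightarrow> 'v" where sp: "span (e ` {..<4}) = UNIV" and
    e0: "eta (e 0) (e 0) = -1" and e1: "\<forall>i\<in>{1..3}. eta (e i) (e i) = 1" and
    eo: "\<forall>i<4. \<forall>j<4. i \<noteq> j \<longrightarrow> eta (e i) (e j) = 0"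
    unfolding minkowski_form_def by blast
  have inj: "inj_on e {..<4}"
  proof (rule inj_onI)
    fix i j assume ij: "i \<in> {..<4::nat}" "j \<in> {..<4}" "e i = e j"
    show "i = j"
    proof (rule ccontr)
      assume "i \<noteq> j"
      hence "eta (e i) (e j) = 0" using eo ij by auto
      moreover have "i = 0 \<or> i \<in> {1..3}" using ij by auto
      hence "eta (e i) (e i) \<noteq> 0" using e0 e1 by auto
      ultimately show False using ij by simp
    qed
  qed
  have "\<exists>c0 c1 c2 c3. v = c0 *\<^sub>R e 0 + c1 *\<^sub>R e 1 + c2 *\<^sub>R e 2 + c3 *\<^sub>R e 3" for v
  proof -
    have "v \<in> span (e ` {..<4})" using sp by simp
    then obtain u where "v = (\<Sum>x\<in>e ` {..<4}. u x *\<^sub>R x)"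
      using span_finite[of "e ` {..<4}"] by auto
    also have "\<dots> = (\<Sum>i<4. u (e i) *\<^sub>R e i)" using sum.reindex[OF inj] by simp
    also have "\<dots> = u (e 0) *\<^sub>R e 0 + u (e 1) *\<^sub>R e 1 + u (e 2) *\<^sub>R e 2 + u (e 3) *\<^sub>R e 3"
      by (simp add: eval_nat_numeral)
    finally show ?thesis by blast
  qed
  moreover have "eta (e 1) (e 1) = 1" "eta (e 2) (e 2) = 1" "eta (e 3) (e 3) = 1" using e1 by auto
  ultimately show ?thesis using that e0 eo by blast
qed




definition lc3 :: "'v::real_vector \<Rightarrow> 'v \<Rightarrow> 'v \<Rightarrow> real \<times> real \<times> real \<Rightarrow> 'v" where
  "lc3 a b c p = fst p *\<^sub>R a + fst (snd p) *\<^sub>R b + snd (snd p) *\<^sub>R c"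

lemma lc3_add: "lc3 a b c p + lc3 a b c q = lc3 a b c (p + q)"
  by (simp add: lc3_def algebra_simps)
lemma lc3_sub: "lc3 a b c p - lc3 a b c q = lc3 a b c (p - q)"
  by (simp add: lc3_def algebra_simps)
lemma lc3_neg: "- lc3 a b c p = lc3 a b c (- p)"
  by (simp add: lc3_def algebra_simps)
lemma lc3_scale: "r *\<^sub>R lc3 a b c p = lc3 a b c (r *\<^sub>R p)"
  by (simp add: lc3_def algebra_simps)
lemma lc3_a: "a = lc3 a b c (1,0,0)" by (simp add: lc3_def)
lemma lc3_b: "b = lc3 a b c (0,1,0)" by (simp add: lc3_def)
lemma lc3_c: "c = lc3 a b c (0,0,1)" by (simp add: lc3_def)
lemma lc3_eq: "p = q \<Longrightarrow> lc3 a b c p = lc3 a b c q" by simp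

lemmas lc3_rules = lc3_add lc3_sub lc3_neg lc3_scale

lemma mink_eta:
  fixes eta :: "'v::euclidean_space \<Rightarrow> 'v \<Rightarrow> real" and e :: "nat \<Rightarrow> 'v"
  assumes bil: "bilinear eta" and sym: "\<And>x y. eta x y = eta y x"
    and e0: "eta (e 0) (e 0) = -1" and e1: "eta (e 1) (e 1) = 1" and e2: "eta (e 2) (e 2) = 1"
    and e3: "eta (e 3) (e 3) = 1"
    and eo: "\<And>i j. i < 4 \<Longrightarrow> j < 4 \<Longrightarrow> i \<noteq> j \<Longrightarrow> eta (e i) (e j) = (0::real)"
  shows "eta (a0 *\<^sub>R e 0 + a1 *\<^sub>R e 1 + a2 *\<^sub>R e 2 + a3 *\<^sub>R e 3)
             (b0 *\<^sub>R e 0 + b1 *\<^sub>R e 1 + b2 *\<^sub>R e 2 + b3 *\<^sub>R e 3)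
         = - a0*b0 + a1*b1 + a2*b2 + a3*b3"
proof -
  have o: "eta (e 0) (e 1) = 0" "eta (e 0) (e 2) = 0" "eta (e 0) (e 3) = 0"
     "eta (e 1) (e 0) = 0" "eta (e 1) (e 2) = 0" "eta (e 1) (e 3) = 0"
     "eta (e 2) (e 0) = 0" "eta (e 2) (e 1) = 0" "eta (e 2) (e 3) = 0"
     "eta (e 3) (e 0) = 0" "eta (e 3) (e 1) = 0" "eta (e 3) (e 2) = 0"
    by (simp_all add: eo)
  show ?thesis
    by (simp add: bilinear_ladd[OF bil] bilinear_radd[OF bil] bilinear_lmul[OF bil]
        bilinear_rmul[OF bil] o e0 e1 e2 e3 o[unfolded One_nat_def] e1[unfolded One_nat_def])
qed

locale mink =
  fixes eta :: "'v::euclidean_space \<Rightarrow> 'v \<Rightarrow> real"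
  assumes bil: "bilinear eta" and sym: "eta x y = eta y x"
    and psd: "eta s s = -1 \<Longrightarrow> eta u s = 0 \<Longrightarrow> eta u u \<ge> 0"
    and pd: "eta s s = -1 \<Longrightarrow> eta u s = 0 \<Longrightarrow> eta u u = 0 \<Longrightarrow> u = 0"

lemma mink_from:
  fixes eta :: "'v::euclidean_space \<Rightarrow> 'v \<Rightarrow> real"
  assumes mf: "minkowski_form eta" shows "mink eta"
proof -
  have bil: "bilinear eta" and sym: "\<And>x y. eta x y = eta y x"
    using mf unfolding minkowski_form_def by auto
  obtain e :: "nat \<Rightarrow> 'v" where
    sp: "\<And>v. \<exists>c0 c1 c2 c3. v = c0 *\<^sub>R e 0 + c1 *\<^sub>R e 1 + c2 *\<^sub>R e 2 + c3 *\<^sub>R e 3" and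
    e: "eta (e 0) (e 0) = -1" "eta (e 1) (e 1) = 1" "eta (e 2) (e 2) = 1" "eta (e 3) (e 3) = 1"
    "\<And>i j. i < 4 \<Longrightarrow> j < 4 \<Longrightarrow> i \<noteq> j \<Longrightarrow> eta (e i) (e j) = 0"
    using coords[OF mf] by blast
  note ev0 = mink_eta[OF bil sym e]
  note ev = ev0 ev0[unfolded One_nat_def]
  have main: "eta u u \<ge> 0 \<and> (eta u u = 0 \<longrightarrow> u = 0)" if "eta s s = -1" "eta u s = 0" for s u
  proof -
    obtain a0 a1 a2 a3 where s: "s = a0 *\<^sub>R e 0 + a1 *\<^sub>R e 1 + a2 *\<^sub>R e 2 + a3 *\<^sub>R e 3"
      using sp by blast
    obtain x0 x1 x2 x3 where u: "u = x0 *\<^sub>R e 0 + x1 *\<^sub>R e 1 + x2 *\<^sub>R e 2 + x3 *\<^sub>R e 3"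
      using sp by blast
    have h1: "a0^2 = 1 + a1^2 + a2^2 + a3^2" using that(1) unfolding s
      by (simp add: ev power2_eq_square)
    have h2: "x0*a0 = x1*a1+x2*a2+x3*a3" using that(2) unfolding s u by (simp add: ev)
    note r = arith4[OF h1 h2]
    have uu: "eta u u = (x1^2 + x2^2 + x3^2) - x0^2" unfolding u by (simp add: ev power2_eq_square)
    show ?thesis using r uu u by auto
  qed
  show ?thesis
    by (unfold_locales) (use bil sym main in auto)
qed

context mink begin

lemmas bl = bilinear_ladd[OF bil] bilinear_radd[OF bil] bilinear_lmul[OF bil]
  bilinear_rmul[OF bil] bilinear_lsub[OF bil] bilinear_rsub[OF bil] bilinear_lneg[OF bil]
  bilinear_rneg[OF bil] bilinear_lzero[OF bil] bilinear_rzero[OF bil]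

lemma rev_cs: assumes "eta s s = -1" "eta x x = -1" shows "(eta s x)^2 \<ge> 1"
proof -
  let ?u = "x + eta s x *\<^sub>R s"
  have "eta ?u s = 0" using assms by (simp add: bl sym[of x s])
  then have "eta ?u ?u \<ge> 0" by (rule psd[OF assms(1)])
  moreover have "eta ?u ?u = (eta s x)^2 - 1" using assms
    by (simp add: bl sym[of x s] power2_eq_square algebra_simps)
  ultimately show ?thesis by simp
qed

end


context mink begin
lemma cs: assumes "eta s s = -1" "eta u s = 0" "eta v s = 0"
  shows "(eta u v)^2 \<le> eta u u * eta v v"
proof (cases "eta v v = 0")
  case True
  then have "v = 0" using pd assms by blast
  then show ?thesis using True by (simp add: bl)
next
  case False
  then have vp: "eta v v > 0" using psd[OF assms(1,3)] by simp
  define t where "t = eta u v / eta v v"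
  let ?w = "u - t *\<^sub>R v"
  have "eta ?w s = 0" using assms by (simp add: bl)
  then have "eta ?w ?w \<ge> 0" by (rule psd[OF assms(1)])
  moreover have "eta ?w ?w = eta u u - 2*t*eta u v + t^2 * eta v v"
    by (simp add: bl sym[of v u] power2_eq_square algebra_simps)
  moreover have "eta u u - 2*t*eta u v + t^2 * eta v v = eta u u - (eta u v)^2 / eta v v"
    using vp unfolding t_def by (simp add: power2_eq_square field_simps)
  ultimately have "(eta u v)^2 / eta v v \<le> eta u u" by simp
  then show ?thesis using vp by (simp add: field_simps)
qed

lemma comp_neg:
  assumes S: "S \<in> components {v. eta v v = -1}" and s: "s \<in> S" and x: "x \<in> S"
  shows "eta s x \<le> -1"
proof -
  have sub: "S \<subseteq> {v. eta v v = -1}" using in_components_subset[OF S] .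
  have conn: "connected ((\<lambda>v. eta s v) ` S)"
    by (rule connected_continuous_image[OF
        bilinear_continuous_on_compose[OF continuous_on_const continuous_on_id bil]
        in_components_connected[OF S]])
  have ss: "eta s s = -1" using s sub by auto
  have sq: "(eta s v)^2 \<ge> 1" if "v \<in> S" for v using rev_cs[OF ss] that sub by auto
  show ?thesis
  proof (rule ccontr)
    assume "\<not> ?thesis"
    then have "eta s x > -1" by simp
    have "eta s x \<ge> 1"
    proof (rule ccontr)
      assume "\<not> eta s x \<ge> 1"
      with \<open>eta s x > -1\<close> have "\<bar>eta s x\<bar> < 1" by simp
      then have "(eta s x)^2 < 1" by (simp add: abs_square_less_1)
      with sq[OF x] show False by simp
    qed
    have "0 \<in> (\<lambda>v. eta s v) ` S"
    proof (rule connectedD_interval[OF conn, of "eta s s" "eta s x" 0])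
      show "eta s s \<in> (\<lambda>v. eta s v) ` S" using s by blast
      show "eta s x \<in> (\<lambda>v. eta s v) ` S" using x by blast
    qed (use ss \<open>eta s x \<ge> 1\<close> in auto)
    then obtain v where "v \<in> S" "eta s v = 0" by auto
    with sq show False by fastforce
  qed
qed

end



lemma id3:
  fixes a b c :: "'v::real_vector"
  assumes M: "M \<noteq> 0" and N: "N \<noteq> 0" and Dn: "D \<noteq> 0" and Pn: "P \<noteq> 0"
    and k: "k = P/N" and g: "g = N/M" and B: "B = k^2 * D" and P: "P = g1+g2"
    and DD: "D = 2*g12 - 2 + (g2-g1)^2" and NN: "N = g1^2+g2^2+g12-1" and MM: "M = 1 + 2*g1*g2 - g12"
    and Ed: "Ed = E2 - E1 - (g2-g1)*A"
  shows "(g - 1) *\<^sub>R (-(A *\<^sub>R a) + ((k*Ed) / B) *\<^sub>R (k *\<^sub>R (c - b - (g2-g1) *\<^sub>R a)))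
        + g *\<^sub>R ((k*Ed) *\<^sub>R a - A *\<^sub>R (k *\<^sub>R (c - b - (g2-g1) *\<^sub>R a)))
       = (1 / M) *\<^sub>R ((2 * (1 - g12)) *\<^sub>R (A *\<^sub>R a) + (E2 - E1) *\<^sub>R (c - b)
                     + (2 * g1) *\<^sub>R ((E2 - E1) *\<^sub>R a) - (2 * g2) *\<^sub>R (A *\<^sub>R (c - b)))"
proof -
  define F where "F = lc3 a b c"
  have Fr: "F p + F q = F (p+q)" "F p - F q = F (p - q)" "- F p = F (-p)" "r *\<^sub>R F p = F (r *\<^sub>R p)"
    for p q r by (simp_all add: F_def lc3_rules)
  have Fa: "a = F (1,0,0)" "b = F (0,1,0)" "c = F (0,0,1)" unfolding F_def by (simp_all add: lc3_def)
  show ?thesis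
    apply (simp only: Fa)
    apply (simp only: Fr)
    apply (rule arg_cong[where f=F])
    apply (simp only: add_Pair diff_Pair uminus_Pair scaleR_Pair real_scaleR_def prod.inject)
    unfolding Ed B k g
    apply (intro conjI)
    subgoal by (simp add: field_simps power2_eq_square M N Dn Pn, unfold DD NN MM P, algebra)
    subgoal by (simp add: field_simps power2_eq_square M N Dn Pn, unfold DD NN MM P, algebra)
    subgoal by (simp add: field_simps power2_eq_square M N Dn Pn, unfold DD NN MM P, algebra)
    done
qed

lemma id_ex:
  fixes a b c :: "'v::real_vector"
  assumes M: "M \<noteq> 0" and MM: "M = 1 + 2*g1*g2 - g12"
  shows "b + (1 / M) *\<^sub>R ((2 * (1 - g12)) *\<^sub>R ((-g1) *\<^sub>R a) + (1 - g12) *\<^sub>R (c - b)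
          + (2 * g1) *\<^sub>R ((1 - g12) *\<^sub>R a) - (2 * g2) *\<^sub>R ((-g1) *\<^sub>R (c - b))) = c"
proof -
  define F where "F = lc3 a b c"
  have Fr: "F p + F q = F (p+q)" "F p - F q = F (p - q)" "- F p = F (-p)" "r *\<^sub>R F p = F (r *\<^sub>R p)"
    for p q r by (simp_all add: F_def lc3_rules)
  have Fa: "a = F (1,0,0)" "b = F (0,1,0)" "c = F (0,0,1)" unfolding F_def by (simp_all add: lc3_def)
  show ?thesis
    apply (simp only: Fa)
    apply (simp only: Fr)
    apply (rule arg_cong[where f=F])
    apply (simp only: add_Pair diff_Pair uminus_Pair scaleR_Pair real_scaleR_def prod.inject)
    apply (intro conjI)
    subgoal by (simp add: field_simps M)
    subgoal by (simp add: field_simps M, unfold MM, algebra)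
    subgoal by (simp add: field_simps M, unfold MM, algebra)
    done
qed

lemma id_un:
  fixes a b c :: "'v::real_vector"
  assumes B: "B \<noteq> 0" and G: "G2 = g * G1 + g * p"
  shows "b + (g - 1) *\<^sub>R (G1 *\<^sub>R a + (p / B) *\<^sub>R c) + g *\<^sub>R (p *\<^sub>R a + G1 *\<^sub>R c)
          - b - (G2 - G1) *\<^sub>R a = ((g - 1) * p / B + g * G1) *\<^sub>R c"
proof -
  define F where "F = lc3 a b c"
  have Fr: "F p + F q = F (p+q)" "F p - F q = F (p - q)" "- F p = F (-p)" "r *\<^sub>R F p = F (r *\<^sub>R p)"
    for p q r by (simp_all add: F_def lc3_rules)
  have Fa: "a = F (1,0,0)" "b = F (0,1,0)" "c = F (0,0,1)" unfolding F_def by (simp_all add: lc3_def)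
  show ?thesis
    apply (simp only: Fa)
    apply (simp only: Fr)
    apply (rule arg_cong[where f=F])
    apply (simp only: add_Pair diff_Pair uminus_Pair scaleR_Pair real_scaleR_def prod.inject)
    apply (intro conjI)
    subgoal by (simp add: G algebra_simps)
    subgoal by simp
    subgoal by (simp add: field_simps B)
    done
qed

lemma kc_one:
  fixes g B p G1 G2 P N k c :: real
  assumes g1: "g > 1" and gB: "g^2 * (1 - B) = 1" and p: "p = G2/g - G1"
    and c: "c = (g - 1) * p / B + g * G1" and P: "P = G1 + G2" and Pp: "P > 0"
    and N: "2 * N = P^2 + c^2 * B" and k: "k = P / N"
  shows "k * c = 1"
proof -
  have gg: "1 < g^2" by (rule one_less_power[OF g1]) simp
  have g0: "g \<noteq> 0" "g + 1 \<noteq> 0" "g - 1 \<noteq> 0" "g^2 - 1 \<noteq> 0" using g1 gg by linarith+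
  have Bg: "B = (g^2 - 1) / g^2" using gB g0 by (simp add: field_simps)
  have B0: "B \<noteq> 0" using Bg g0 by simp
  have cg: "c = g * P / (g + 1)"
    unfolding c p Bg P using g0 by (simp add: field_simps power2_eq_square)
  have cB: "c^2 * B = P^2 * (g - 1) / (g + 1)"
  proof -
    have h1: "(g+1)^2 \<noteq> 0" "g^2 \<noteq> 0" using g0 by auto
    have "c^2 * B = (g*P)^2/(g+1)^2 * ((g^2-1)/g^2)" by (simp add: cg Bg power_divide)
    also have "\<dots> = P^2 * (g^2 - 1) / (g+1)^2"
      using h1 by (simp add: power_mult_distrib)
    also have "g^2 - 1 = (g - 1) * (g + 1)" by algebra
    also have "P^2 * ((g - 1) * (g + 1)) / (g+1)^2 = P^2 * (g - 1) / (g + 1)"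
      using g0 by (simp add: power2_eq_square)
    finally show ?thesis .
  qed
  have Ng: "N = P^2 * g / (g + 1)"
    using N unfolding cB using g0 by (simp add: field_simps)
  have Nn: "P^2 * g \<noteq> 0" "P \<noteq> 0" using Pp g0 by auto
  have "k * c = (P * (g + 1) / (P^2 * g)) * (g * P / (g + 1))" unfolding k Ng cg using g0 by simp
  also have "\<dots> = (P * P * g * (g + 1)) / (P^2 * g * (g + 1))" by (simp add: algebra_simps)
  also have "\<dots> = 1" using Nn g0 by (simp add: power2_eq_square)
  finally show ?thesis .
qed

lemma (in mink) boost_expand:
  assumes B0: "eta \<beta> \<beta> > 0" and g: "g = 1 / sqrt (1 - eta \<beta> \<beta>)"
  shows "boost eta s \<beta> w = w + (g - 1) *\<^sub>R (-(eta s w) *\<^sub>R s + (eta \<beta> w / eta \<beta> \<beta>) *\<^sub>R \<beta>)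
           + g *\<^sub>R (eta \<beta> w *\<^sub>R s - eta s w *\<^sub>R \<beta>)"
proof -
  have bne: "\<beta> \<noteq> 0" using B0 by (auto simp: bl)
  define b where "b = sqrt (eta \<beta> \<beta>)"
  have b0: "b > 0" using B0 unfolding b_def by simp
  have bb: "b^2 = eta \<beta> \<beta>" using B0 unfolding b_def by simp
  have e1: "eta ((1 / b) *\<^sub>R \<beta>) w *\<^sub>R ((1 / b) *\<^sub>R \<beta>) = (eta \<beta> w / eta \<beta> \<beta>) *\<^sub>R \<beta>"
    using b0 by (simp add: bl bb[symmetric] power2_eq_square)
  have e2: "(b * g) *\<^sub>R (eta ((1 / b) *\<^sub>R \<beta>) w *\<^sub>R s - eta s w *\<^sub>R ((1 / b) *\<^sub>R \<beta>))
     = g *\<^sub>R (eta \<beta> w *\<^sub>R s - eta s w *\<^sub>R \<beta>)"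
    using b0 by (simp add: bl scaleR_diff_right)
  have sb: "sqrt (1 - b^2) = sqrt (1 - eta \<beta> \<beta>)" using bb by simp
  show ?thesis
    unfolding boost_def tens_def Let_def using bne
    apply (simp only: if_False)
    apply (fold b_def)
    apply (simp only: sb e1 e2 g[symmetric])
    apply (simp add: algebra_simps)
    done
qed




context mink begin

lemma main_for:
  assumes S: "S \<in> components {v. eta v v = -1}" and sS: "s \<in> S" and s1S: "s1 \<in> S" and s2S: "s2 \<in> S"
  shows "(\<exists>!\<beta>. eta \<beta> s = 0 \<and> eta \<beta> \<beta> < 1 \<and> boost eta s \<beta> s1 = s2)
          \<and> (let \<beta> = beta_vel eta s s1 s2 in
               eta \<beta> s = 0 \<and> eta \<beta> \<beta> < 1 \<and> boost eta s \<beta> s1 = s2)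
          \<and> (let g1 = - eta s s1; g2 = - eta s s2; g12 = - eta s1 s2; s21 = s2 - s1 in
               boost eta s (beta_vel eta s s1 s2) =
                 (\<lambda>w. w + (1 / (1 + 2 * g1 * g2 - g12)) *\<^sub>R
                    ((2 * (1 - g12)) *\<^sub>R tens eta s s w + tens eta s21 s21 w
                     + (2 * g1) *\<^sub>R tens eta s s21 w - (2 * g2) *\<^sub>R tens eta s21 s w)))"
proof -
  have sub: "S \<subseteq> {v. eta v v = -1}" using in_components_subset[OF S] .
  have ss: "eta s s = -1" and s11: "eta s1 s1 = -1" and s22: "eta s2 s2 = -1"
    using sub sS s1S s2S by auto
  define g1 where "g1 = - eta s s1"
  define g2 where "g2 = - eta s s2"
  define g12 where "g12 = - eta s1 s2"
  have e: "eta s s1 = - g1" "eta s s2 = - g2" "eta s1 s2 = - g12"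
    "eta s1 s = - g1" "eta s2 s = - g2" "eta s2 s1 = - g12"
    unfolding g1_def g2_def g12_def by (simp_all add: sym[of s1 s] sym[of s2 s] sym[of s2 s1])
  have g1: "g1 \<ge> 1" using comp_neg[OF S sS s1S] unfolding g1_def by simp
  have g2: "g2 \<ge> 1" using comp_neg[OF S sS s2S] unfolding g2_def by simp
  define d where "d = s2 - s1 - (g2 - g1) *\<^sub>R s"
  have ds: "eta d s = 0" unfolding d_def by (simp add: bl e ss)
  define D where "D = 2*g12 - 2 + (g2-g1)^2"
  have dd: "eta d d = D" unfolding d_def D_def
    by (simp add: bl e ss s11 s22 power2_eq_square algebra_simps)
  have D0: "D \<ge> 0" using psd[OF ss ds] dd by simp
  define M where "M = 1 + 2*g1*g2 - g12"
  have M0: "M > 0"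
  proof -
    define u1 where "u1 = s1 - g1 *\<^sub>R s"
    define u2 where "u2 = s2 - g2 *\<^sub>R s"
    have "eta u1 s = 0" "eta u2 s = 0" unfolding u1_def u2_def by (simp_all add: bl e ss)
    from cs[OF ss this] have "(eta u1 u2)^2 \<le> eta u1 u1 * eta u2 u2" .
    moreover have "eta u1 u2 = g1*g2 - g12" "eta u1 u1 = g1^2 - 1" "eta u2 u2 = g2^2 - 1"
      unfolding u1_def u2_def by (simp_all add: bl e ss s11 s22 power2_eq_square algebra_simps)
    ultimately have h: "(g1*g2 - g12)^2 \<le> (g1^2 - 1) * (g2^2 - 1)" by simp
    have "(g1^2 - 1) * (g2^2 - 1) \<le> (g1*g2)^2"
    proof -
      have "1 \<le> g1^2" using g1 by (simp add: one_le_power)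
      moreover have "0 \<le> g2^2" by simp
      ultimately have "(g1^2 - 1) * (g2^2 - 1) = (g1*g2)^2 - g1^2 - g2^2 + 1"
        by (simp add: power_mult_distrib algebra_simps)
      then show ?thesis using \<open>1 \<le> g1^2\<close> \<open>0 \<le> g2^2\<close> by linarith
    qed
    with h have "(g1*g2 - g12)^2 \<le> (g1*g2)^2" by linarith
    then have "\<bar>g1*g2 - g12\<bar> \<le> \<bar>g1*g2\<bar>" using abs_le_square_iff by blast
    moreover have "g1*g2 \<ge> 1" using g1 g2 by (metis mult_mono' mult_1_right zero_le_one order_trans)
    ultimately show ?thesis unfolding M_def by linarith
  qed
  define P where "P = g1 + g2"
  have P0: "P \<ge> 2" unfolding P_def using g1 g2 by simp
  define N where "N = g1^2 + g2^2 + g12 - 1"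
  have NPD: "2*N = P^2 + D" unfolding N_def P_def D_def by (simp add: power2_eq_square algebra_simps)
  have MPD: "2*M = P^2 - D" unfolding M_def P_def D_def by (simp add: power2_eq_square algebra_simps)
  have N0: "N > 0"
  proof -
    have PP: "2 * P \<le> P * P" by (rule mult_right_mono) (use P0 in auto)
    have "P^2 \<ge> 4" using P0 PP unfolding power2_eq_square by linarith
    then show ?thesis using NPD D0 by linarith
  qed
  define k where "k = P / N"
  have bv: "beta_vel eta s s1 s2 = k *\<^sub>R d"
    unfolding beta_vel_def Let_def k_def P_def N_def d_def by (simp add: e)
  have NM: "N^2 - P^2 * D = M^2"
  proof -
    have "4 * (N^2 - P^2 * D) = (2*N)^2 - 4 * P^2 * D" by (simp add: power2_eq_square algebra_simps)
    also have "\<dots> = (2*M)^2" unfolding NPD MPD by (simp add: power2_eq_square algebra_simps)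
    finally show ?thesis by (simp add: power2_eq_square)
  qed
  have BB: "eta (k *\<^sub>R d) (k *\<^sub>R d) = k^2 * D" by (simp add: bl dd power2_eq_square)
  have oneB: "1 - k^2 * D = (M/N)^2"
  proof -
    have "1 - k^2 * D = (N^2 - P^2*D)/N^2" unfolding k_def using N0 by (simp add: field_simps power_divide)
    also have "\<dots> = (M/N)^2" unfolding NM by (simp add: power_divide)
    finally show ?thesis .
  qed
  have Blt: "k^2 * D < 1" using oneB M0 N0 by (smt (verit) zero_less_power divide_pos_pos)
  have sq: "sqrt (1 - k^2 * D) = M / N" unfolding oneB using M0 N0 by simp
  have F3: "boost eta s (k *\<^sub>R d) = (\<lambda>w. w + (1 / M) *\<^sub>R
                    ((2 * (1 - g12)) *\<^sub>R tens eta s s w + tens eta (s2 - s1) (s2 - s1) w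
                     + (2 * g1) *\<^sub>R tens eta s (s2 - s1) w - (2 * g2) *\<^sub>R tens eta (s2 - s1) s w))"
  proof (cases "d = 0")
    case True
    then have D00: "D = 0" using dd by (simp add: bl)
    have s2e: "s2 = s1 + (g2 - g1) *\<^sub>R s" using True unfolding d_def by (simp add: algebra_simps)
    have "eta s1 s2 = -1 - (g2 - g1) * g1" unfolding s2e by (simp add: bl s11 e)
    then have g12e: "g12 = 1 + (g2 - g1) * g1" using e by simp
    with D00 have "(g2 - g1) * (g1 + g2) = 0" unfolding D_def by (simp add: power2_eq_square algebra_simps)
    then have "g2 = g1" using g1 g2 by simp
    then have s21: "s2 = s1" and g121: "g12 = 1" using s2e g12e by auto
    show ?thesis using True unfolding s21 g121 by (auto simp: boost_def tens_def bl)
  next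
    case False
    then have Dp: "D > 0" using pd[OF ss ds] dd D0 by force
    have kp: "k > 0" unfolding k_def using P0 N0 by simp
    have B0: "eta (k *\<^sub>R d) (k *\<^sub>R d) > 0" unfolding BB using kp Dp by simp
    define g where "g = N / M"
    have gdef: "g = 1 / sqrt (1 - eta (k *\<^sub>R d) (k *\<^sub>R d))" unfolding BB sq g_def by simp
    show ?thesis
    proof
      fix w
      define A where "A = eta s w"
      define E1 where "E1 = eta s1 w"
      define E2 where "E2 = eta s2 w"
      define Ed where "Ed = E2 - E1 - (g2 - g1) * A"
      have ew: "eta (k *\<^sub>R d) w = k * Ed" unfolding d_def Ed_def A_def E1_def E2_def
        by (simp add: bl algebra_simps)
      have "boost eta s (k *\<^sub>R d) w = w + ((g - 1) *\<^sub>R (-(A *\<^sub>R s) + ((k*Ed) / (k^2 * D)) *\<^sub>R (k *\<^sub>R (s2 - s1 - (g2-g1) *\<^sub>R s)))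
        + g *\<^sub>R ((k*Ed) *\<^sub>R s - A *\<^sub>R (k *\<^sub>R (s2 - s1 - (g2-g1) *\<^sub>R s))))"
        unfolding boost_expand[OF B0 gdef] ew BB unfolding A_def d_def by (simp add: algebra_simps)
      also have "\<dots> = w + (1 / M) *\<^sub>R ((2 * (1 - g12)) *\<^sub>R (A *\<^sub>R s) + (E2 - E1) *\<^sub>R (s2 - s1)
                     + (2 * g1) *\<^sub>R ((E2 - E1) *\<^sub>R s) - (2 * g2) *\<^sub>R (A *\<^sub>R (s2 - s1)))"
        by (subst id3[where M=M and N=N and D=D and P=P and ?g12.0=g12 and ?g1.0=g1 and ?g2.0=g2 and ?E1.0=E1 and ?E2.0=E2 and A=A and k=k and g=g])
           (use M0 N0 Dp P0 in \<open>auto simp: k_def g_def D_def N_def M_def P_def Ed_def\<close>)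
      also have "\<dots> = w + (1 / M) *\<^sub>R
                    ((2 * (1 - g12)) *\<^sub>R tens eta s s w + tens eta (s2 - s1) (s2 - s1) w
                     + (2 * g1) *\<^sub>R tens eta s (s2 - s1) w - (2 * g2) *\<^sub>R tens eta (s2 - s1) s w)"
        unfolding tens_def A_def E1_def E2_def by (simp add: bl)
      finally show "boost eta s (k *\<^sub>R d) w = \<dots>" .
    qed
  qed
  have part3: "boost eta s (k *\<^sub>R d) s1 = s2"
  proof -
    have h: "eta (s2 - s1) s1 = 1 - g12" by (simp add: bl e s11)
    have "boost eta s (k *\<^sub>R d) s1 = s1 + (1 / M) *\<^sub>R ((2 * (1 - g12)) *\<^sub>R ((-g1) *\<^sub>R s) + (1 - g12) *\<^sub>R (s2 - s1)
          + (2 * g1) *\<^sub>R ((1 - g12) *\<^sub>R s) - (2 * g2) *\<^sub>R ((-g1) *\<^sub>R (s2 - s1)))"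
      unfolding F3 tens_def h by (simp add: e)
    also have "\<dots> = s2" by (rule id_ex) (use M0 in \<open>auto simp: M_def\<close>)
    finally show ?thesis .
  qed
  have ex: "eta (k *\<^sub>R d) s = 0 \<and> eta (k *\<^sub>R d) (k *\<^sub>R d) < 1 \<and> boost eta s (k *\<^sub>R d) s1 = s2"
    using ds Blt part3 BB by (simp add: bl)
  have uniq: "\<beta> = k *\<^sub>R d" if hb: "eta \<beta> s = 0" "eta \<beta> \<beta> < 1" "boost eta s \<beta> s1 = s2" for \<beta>
  proof (cases "\<beta> = 0")
    case True
    then have "s2 = s1" using hb(3) by (simp add: boost_def)
    then have "d = 0" unfolding d_def using e by simp
    then show ?thesis using True by simp
  next
    case False
    have Bp: "eta \<beta> \<beta> > 0" using psd[OF ss hb(1)] pd[OF ss hb(1)] False by force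
    define B where "B = eta \<beta> \<beta>"
    define g where "g = 1 / sqrt (1 - B)"
    have sB: "0 < sqrt (1 - B)" "sqrt (1 - B) < 1" using Bp hb(2) unfolding B_def by auto
    have gg1: "g > 1" unfolding g_def using sB by simp
    have gB: "g^2 * (1 - B) = 1" unfolding g_def using sB hb(2) B_def
      by (simp add: power_divide)
    define p where "p = eta \<beta> s1"
    have bs: "eta s \<beta> = 0" using hb(1) sym by simp
    have s2x: "s2 = s1 + (g - 1) *\<^sub>R (g1 *\<^sub>R s + (p / B) *\<^sub>R \<beta>) + g *\<^sub>R (p *\<^sub>R s + g1 *\<^sub>R \<beta>)"
      using hb(3) unfolding boost_expand[OF Bp g_def[unfolded B_def]]
      by (simp add: e p_def B_def)
    have "eta s s2 = - g1 + (g - 1) * (- g1) + g * (- p)"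
      by (subst s2x) (simp add: bl e ss bs)
    then have G: "g2 = g * g1 + g * p" using e by (simp add: algebra_simps)
    define c where "c = (g - 1) * p / B + g * g1"
    have B0: "B \<noteq> 0" using Bp B_def by simp
    have dc: "d = c *\<^sub>R \<beta>"
      unfolding d_def c_def using id_un[OF B0 G, of s1 s \<beta>] s2x by simp
    have Dc: "D = c^2 * B" using dd unfolding dc B_def by (simp add: bl power2_eq_square)
    have "k * c = 1"
    proof (rule kc_one[OF gg1 gB _ c_def P_def])
      show "p = g2 / g - g1" using G gg1 by (simp add: field_simps)
      show "P > 0" using P0 by simp
      show "2 * N = P^2 + c^2 * B" using NPD Dc by simp
      show "k = P / N" by (rule k_def)
    qed
    then show ?thesis unfolding dc by simp
  qed
  show ?thesis
    unfolding Let_def bv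
    using ex uniq F3 unfolding g1_def g2_def g12_def M_def
    by blast
qed

end


theorem mainTheorem3:
  fixes eta :: "'v::euclidean_space \<Rightarrow> 'v \<Rightarrow> real" and S :: "'v set"
  assumes "minkowski_form eta"
    and "S \<in> components {v. eta v v = -1}"
  shows "(\<forall>s\<in>S. \<forall>s1\<in>S. \<forall>s2\<in>S.
            (\<exists>!\<beta>. eta \<beta> s = 0 \<and> eta \<beta> \<beta> < 1 \<and> boost eta s \<beta> s1 = s2)
          \<and> (let \<beta> = beta_vel eta s s1 s2 in
               eta \<beta> s = 0 \<and> eta \<beta> \<beta> < 1 \<and> boost eta s \<beta> s1 = s2)
          \<and> (let g1 = - eta s s1; g2 = - eta s s2; g12 = - eta s1 s2; s21 = s2 - s1 in
               boost eta s (beta_vel eta s s1 s2) =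
                 (\<lambda>w. w + (1 / (1 + 2 * g1 * g2 - g12)) *\<^sub>R
                    ((2 * (1 - g12)) *\<^sub>R tens eta s s w + tens eta s21 s21 w
                     + (2 * g1) *\<^sub>R tens eta s s21 w - (2 * g2) *\<^sub>R tens eta s21 s w))))
       \<and> (\<forall>L. linear L \<and> (\<forall>x y. eta (L x) (L y) = eta x y) \<and> L ` S = S \<longrightarrow>
            (\<forall>s\<in>S. \<forall>s1\<in>S. \<forall>s2\<in>S.
               beta_vel eta (L s) (L s1) (L s2) = L (beta_vel eta s s1 s2)))"
proof -
  interpret mink eta by (rule mink_from[OF assms(1)])
  show ?thesis
    apply (rule conjI)
    subgoal using main_for[OF assms(2)] by blast
    subgoal
    proof (intro allI impI ballI)
      fix L s s1 s2
      assume H: "linear L \<and> (\<forall>x y. eta (L x) (L y) = eta x y) \<and> L ` S = S"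
      then have lin: "linear L" and pres: "\<And>x y. eta (L x) (L y) = eta x y" by auto
      show "beta_vel eta (L s) (L s1) (L s2) = L (beta_vel eta s s1 s2)"
        unfolding beta_vel_def Let_def pres by (simp add: linear_diff[OF lin] linear_cmul[OF lin])
    qed
    done
qed

end
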